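(* Let $(l,k,b)$ be a suspension triplet for $(X_A,\sigma_A)$. Then the one-sided suspension space $S^{l,k}_{A,b}$ is a compact Hausdorff space.
   Context: Let $N>1$ and $A$ an irreducible $N\times N$ $\{0,1\}$-matrix which is not a permutation matrix. $X_A$ is the compact space of sequences $(x_n)_{n\in\mathbb N}$, $x_n\in\{1,\dots,N\}$, $A(x_n,x_{n+1})=1$ (product topology), with $\sigma_A((x_n)_n)=(x_{n+1})_n$. $\mathbb Z_+$, $\mathbb R_+$ are nonnegative integers/reals. $H^A$ is the quotient of $C(X_A,\mathbb Z)$ by $\{u-u\circ\sigma_A\}$, $H^A_+$ the classes of $\mathbb Z_+$-valued continuous functions; $[f]\in H^A_+$ is an order unit if for every $[u]\in H^A$ some $n\in\mathbb N$ has $n[f]-[u]\in H^A_+$. A suspension triplet is $(l,k,b)$ with $l,k\in C(X_A,\mathbb R_+)$, $b\in C(X_A,\mathbb R)$ such that $c=l-k$ is integer-valued with $[c]$ an order unit, and $l-b$, $k-b\circ\sigma_A$ take values in $\mathbb Z_+$. $X^{\mathbb R}_{A,b}=\{(x,r)\in X_A\times\mathbb R: r\ge b(x)\}$ (subspace topology of $X_A\times\mathbb R$), $\sim_{l,k}$ is the equivalence relation generated by $(x,r)\sim_{l,k}(\sigma_A(x),r-c(x))$ whenever $r\ge l(x)$, and $S^{l,k}_{A,b}=X^{\mathbb R}_{A,b}/\!\sim_{l,k}$ with the quotient topology. *)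

theory Defs
  imports "HOL-Analysis.Analysis"
begin

text \<open>Matrices are N x N {0,1}-matrices indexed by {1..N}, given as functions nat => nat => nat.\<close>

fun mat_pow :: "nat \<Rightarrow> (nat \<Rightarrow> nat \<Rightarrow> nat) \<Rightarrow> nat \<Rightarrow> nat \<Rightarrow> nat \<Rightarrow> nat" where
  "mat_pow N A 0 i j = (if i = j then 1 else 0)"
| "mat_pow N A (Suc n) i j = (\<Sum>m\<in>{1..N}. mat_pow N A n i m * A m j)"

definition zero_one_matrix :: "nat \<Rightarrow> (nat \<Rightarrow> nat \<Rightarrow> nat) \<Rightarrow> bool" where
  "zero_one_matrix N A \<longleftrightarrow> (\<forall>i\<in>{1..N}. \<forall>j\<in>{1..N}. A i j \<in> {0, 1})"

definition irreducible_matrix :: "nat \<Rightarrow> (nat \<Rightarrow> nat \<Rightarrow> nat) \<Rightarrow> bool" where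
  "irreducible_matrix N A \<longleftrightarrow>
     (\<forall>i\<in>{1..N}. \<forall>j\<in>{1..N}. \<exists>n>0. mat_pow N A n i j > 0)"

definition permutation_matrix :: "nat \<Rightarrow> (nat \<Rightarrow> nat \<Rightarrow> nat) \<Rightarrow> bool" where
  "permutation_matrix N A \<longleftrightarrow>
     (\<exists>p. p permutes {1..N} \<and> (\<forall>i\<in>{1..N}. \<forall>j\<in>{1..N}. A i j = (if p i = j then 1 else 0)))"

definition XA :: "nat \<Rightarrow> (nat \<Rightarrow> nat \<Rightarrow> nat) \<Rightarrow> (nat \<Rightarrow> nat) set" where
  "XA N A = {x. \<forall>n. x n \<in> {1..N} \<and> A (x n) (x (Suc n)) = 1}"

definition XA_top :: "nat \<Rightarrow> (nat \<Rightarrow> nat \<Rightarrow> nat) \<Rightarrow> (nat \<Rightarrow> nat) topology" where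
  "XA_top N A = subtopology (product_topology (\<lambda>_. discrete_topology {1..N}) UNIV) (XA N A)"

definition shift :: "(nat \<Rightarrow> nat) \<Rightarrow> (nat \<Rightarrow> nat)" where
  "shift x = (\<lambda>n. x (Suc n))"

text \<open>Continuous integer-valued functions on X_A (represented as real-valued functions
  taking integer values on X_A).\<close>

definition cont_int :: "nat \<Rightarrow> (nat \<Rightarrow> nat \<Rightarrow> nat) \<Rightarrow> ((nat \<Rightarrow> nat) \<Rightarrow> real) \<Rightarrow> bool" where
  "cont_int N A f \<longleftrightarrow> continuous_map (XA_top N A) euclideanreal f \<and> (\<forall>x\<in>XA N A. f x \<in> \<int>)"

text \<open>[f] is an order unit of (H^A, H^A_+): for every continuous integer function u there
  is n with n[f] - [u] in H^A_+, i.e. n f - u = g + (h - h o sigma) with g continuous, Z_+-valued.\<close>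

definition order_unit :: "nat \<Rightarrow> (nat \<Rightarrow> nat \<Rightarrow> nat) \<Rightarrow> ((nat \<Rightarrow> nat) \<Rightarrow> real) \<Rightarrow> bool" where
  "order_unit N A f \<longleftrightarrow>
     (\<forall>u. cont_int N A u \<longrightarrow>
        (\<exists>n::nat. \<exists>g h. cont_int N A g \<and> (\<forall>x\<in>XA N A. g x \<ge> 0) \<and> cont_int N A h \<and>
            (\<forall>x\<in>XA N A. real n * f x - u x = g x + (h x - h (shift x)))))"

definition suspension_triplet ::
  "nat \<Rightarrow> (nat \<Rightarrow> nat \<Rightarrow> nat) \<Rightarrow> ((nat \<Rightarrow> nat) \<Rightarrow> real) \<Rightarrow> ((nat \<Rightarrow> nat) \<Rightarrow> real)
     \<Rightarrow> ((nat \<Rightarrow> nat) \<Rightarrow> real) \<Rightarrow> bool" where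
  "suspension_triplet N A l k b \<longleftrightarrow>
     continuous_map (XA_top N A) euclideanreal l \<and> (\<forall>x\<in>XA N A. l x \<ge> 0) \<and>
     continuous_map (XA_top N A) euclideanreal k \<and> (\<forall>x\<in>XA N A. k x \<ge> 0) \<and>
     continuous_map (XA_top N A) euclideanreal b \<and>
     cont_int N A (\<lambda>x. l x - k x) \<and> order_unit N A (\<lambda>x. l x - k x) \<and>
     (\<forall>x\<in>XA N A. l x - b x \<in> \<int> \<and> l x - b x \<ge> 0) \<and>
     (\<forall>x\<in>XA N A. k x - b (shift x) \<in> \<int> \<and> k x - b (shift x) \<ge> 0)"

definition XR :: "nat \<Rightarrow> (nat \<Rightarrow> nat \<Rightarrow> nat) \<Rightarrow> ((nat \<Rightarrow> nat) \<Rightarrow> real) \<Rightarrow> ((nat \<Rightarrow> nat) \<times> real) set" where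
  "XR N A b = {(x, r). x \<in> XA N A \<and> r \<ge> b x}"

definition XR_top :: "nat \<Rightarrow> (nat \<Rightarrow> nat \<Rightarrow> nat) \<Rightarrow> ((nat \<Rightarrow> nat) \<Rightarrow> real) \<Rightarrow> ((nat \<Rightarrow> nat) \<times> real) topology" where
  "XR_top N A b = subtopology (prod_topology (XA_top N A) euclideanreal) (XR N A b)"

definition susp_gen :: "nat \<Rightarrow> (nat \<Rightarrow> nat \<Rightarrow> nat) \<Rightarrow> ((nat \<Rightarrow> nat) \<Rightarrow> real) \<Rightarrow> ((nat \<Rightarrow> nat) \<Rightarrow> real)
    \<Rightarrow> ((nat \<Rightarrow> nat) \<Rightarrow> real) \<Rightarrow> (((nat \<Rightarrow> nat) \<times> real) \<times> ((nat \<Rightarrow> nat) \<times> real)) set" where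
  "susp_gen N A l k b = {((x, r), (shift x, r - (l x - k x))) | x r. (x, r) \<in> XR N A b \<and> r \<ge> l x}"

definition gen_equiv :: "'a set \<Rightarrow> ('a \<times> 'a) set \<Rightarrow> ('a \<times> 'a) set" where
  "gen_equiv S R = ((R \<union> R\<inverse>)\<^sup>* \<inter> (S \<times> S))"

definition quotient_topology :: "'a topology \<Rightarrow> ('a \<times> 'a) set \<Rightarrow> 'a set topology" where
  "quotient_topology X E = topology (\<lambda>U. U \<subseteq> topspace X // E \<and> openin X (\<Union>U))"

definition suspension_space :: "nat \<Rightarrow> (nat \<Rightarrow> nat \<Rightarrow> nat) \<Rightarrow> ((nat \<Rightarrow> nat) \<Rightarrow> real)
    \<Rightarrow> ((nat \<Rightarrow> nat) \<Rightarrow> real) \<Rightarrow> ((nat \<Rightarrow> nat) \<Rightarrow> real) \<Rightarrow> ((nat \<Rightarrow> nat) \<times> real) set topology" where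
  "suspension_space N A l k b =
     quotient_topology (XR_top N A b) (gen_equiv (XR N A b) (susp_gen N A l k b))"

end

theory Submission
  imports Defs
begin

lemma topspace_XA_top: "topspace (XA_top N A) = XA N A"
  unfolding XA_top_def XA_def by (auto simp: PiE_def)

lemma shift_XA: "x \<in> XA N A \<Longrightarrow> shift x \<in> XA N A"
  unfolding XA_def shift_def by auto

lemma funpow_shift_XA: "x \<in> XA N A \<Longrightarrow> (shift ^^ t) x \<in> XA N A"
  by (induction t) (auto simp: shift_XA)

lemma cont_shift: "continuous_map (XA_top N A) (XA_top N A) shift"
proof -
  have "continuous_map (XA_top N A) (product_topology (\<lambda>_. discrete_topology {1..N}) UNIV) shift"
    unfolding XA_top_def continuous_map_componentwise_UNIV shift_def
    by (auto intro!: continuous_map_from_subtopology continuous_map_product_projection)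
  then show ?thesis
    unfolding continuous_map_in_subtopology[of _ "XA_top N A"]
    by (metis (no_types, lifting) XA_top_def Pi_I continuous_map_in_subtopology shift_XA topspace_XA_top)
qed

lemma Hausdorff_XA: "Hausdorff_space (XA_top N A)"
  unfolding XA_top_def
  by (intro Hausdorff_space_subtopology) (simp add: Hausdorff_space_product_topology)

lemma compact_XA: "compact_space (XA_top N A)"
proof -
  let ?P = "product_topology (\<lambda>_::nat. discrete_topology {1..N}) UNIV"
  let ?D = "discrete_topology {1..N}"
  have cP: "compact_space ?P"
    by (simp add: compact_space_product_topology compact_space_discrete_topology)
  have cl: "closedin ?P {x \<in> topspace ?P. (x n, x (Suc n)) \<in> {(i,j). i \<in> {1..N} \<and> j \<in> {1..N} \<and> A i j = 1}}" for n
  proof (rule closedin_continuous_map_preimage)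
    show "continuous_map ?P (prod_topology ?D ?D) (\<lambda>x. (x n, x (Suc n)))"
      by (intro continuous_map_pairedI continuous_map_product_projection) auto
    have "compactin (prod_topology ?D ?D) {(i,j). i \<in> {1..N} \<and> j \<in> {1..N} \<and> A i j = 1}"
      by (rule finite_imp_compactin) (auto intro: finite_subset[of _ "{1..N}\<times>{1..N}"])
    then show "closedin (prod_topology ?D ?D) {(i,j). i \<in> {1..N} \<and> j \<in> {1..N} \<and> A i j = 1}"
      by (intro compactin_imp_closedin) (auto simp: Hausdorff_space_prod_topology)
  qed
  have eq: "XA N A = topspace ?P \<inter> (\<Inter>n. {x \<in> topspace ?P. (x n, x (Suc n)) \<in> {(i,j). i \<in> {1..N} \<and> j \<in> {1..N} \<and> A i j = 1}})"
    unfolding XA_def by (auto simp: PiE_def)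
  have "closedin ?P (XA N A)"
    unfolding eq using cl closedin_topspace[of ?P] by (intro closedin_Int closedin_Inter) auto
  then have "compactin ?P (XA N A)"
    using cP closedin_compact_space by blast
  then show ?thesis unfolding XA_top_def by (simp add: compact_space_subtopology)
qed

lemma bounded_on_compact:
  assumes "compact_space X" "continuous_map X euclideanreal f"
  obtains B where "\<And>x. x \<in> topspace X \<Longrightarrow> \<bar>f x\<bar> \<le> B"
proof -
  have "compactin euclideanreal (f ` topspace X)"
    using assms image_compactin compact_space_def by blast
  then have "bounded (f ` topspace X)" by (simp add: compact_imp_bounded)
  then show ?thesis using that unfolding bounded_real by auto
qed

locale susp =
  fixes N :: nat and A :: "nat \<Rightarrow> nat \<Rightarrow> nat" and l k b :: "(nat \<Rightarrow> nat) \<Rightarrow> real"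
  assumes st: "suspension_triplet N A l k b"
begin

abbreviation "X \<equiv> XA_top N A"
abbreviation "P \<equiv> prod_topology X euclideanreal"
abbreviation "XR' \<equiv> XR N A b"

definition c :: "(nat \<Rightarrow> nat) \<Rightarrow> real" where "c x = l x - k x"
definition G :: "(nat \<Rightarrow> nat) \<times> real \<Rightarrow> (nat \<Rightarrow> nat) \<times> real" where
  "G p = (shift (fst p), snd p - c (fst p))"
definition valid :: "nat \<Rightarrow> (nat \<Rightarrow> nat) \<times> real \<Rightarrow> bool" where
  "valid i p \<longleftrightarrow> (\<forall>t<i. l (fst ((G ^^ t) p)) \<le> snd ((G ^^ t) p))"
definition E where "E = gen_equiv XR' (susp_gen N A l k b)"
definition ssum :: "nat \<Rightarrow> (nat \<Rightarrow> nat) \<Rightarrow> real" where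
  "ssum t x = (\<Sum>i<t. c ((shift ^^ i) x))"

lemma cont_l: "continuous_map X euclideanreal l"
  and l_nonneg: "x \<in> XA N A \<Longrightarrow> l x \<ge> 0"
  and cont_k: "continuous_map X euclideanreal k"
  and cont_b: "continuous_map X euclideanreal b"
  and lb: "x \<in> XA N A \<Longrightarrow> l x - b x \<ge> 0"
  and kb: "x \<in> XA N A \<Longrightarrow> k x - b (shift x) \<ge> 0"
  and ou: "order_unit N A c"
  using st unfolding suspension_triplet_def c_def[abs_def] by auto

lemma cont_c: "continuous_map X euclideanreal c"
  unfolding c_def[abs_def] by (intro continuous_map_diff cont_l cont_k)

lemma G_funpow: "(G ^^ t) (x, r) = ((shift ^^ t) x, r - ssum t x)"
  by (induction t) (auto simp: G_def ssum_def)

lemma valid_0 [simp]: "valid 0 p" unfolding valid_def by simp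

lemma valid_Suc: "valid (Suc i) p \<longleftrightarrow> valid i p \<and> l (fst ((G ^^ i) p)) \<le> snd ((G ^^ i) p)"
  unfolding valid_def using less_Suc_eq by auto

lemma valid_Suc': "valid (Suc i) p \<longleftrightarrow> l (fst p) \<le> snd p \<and> valid i (G p)"
  unfolding valid_def All_less_Suc2 by (simp add: funpow_Suc_right del: funpow.simps)

lemma valid_mono: "valid i p \<Longrightarrow> j \<le> i \<Longrightarrow> valid j p"
  unfolding valid_def by auto

lemma G_XR: "p \<in> XR' \<Longrightarrow> l (fst p) \<le> snd p \<Longrightarrow> G p \<in> XR'"
  using kb[of "fst p"] shift_XA[of "fst p" N A]
  unfolding XR_def G_def c_def by auto

lemma valid_XR: "p \<in> XR' \<Longrightarrow> valid i p \<Longrightarrow> t \<le> i \<Longrightarrow> (G ^^ t) p \<in> XR'"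
proof (induction t)
  case 0 then show ?case by simp
next
  case (Suc t)
  then have "(G ^^ t) p \<in> XR'" by simp
  moreover have "l (fst ((G ^^ t) p)) \<le> snd ((G ^^ t) p)"
    using Suc.prems unfolding valid_def by auto
  ultimately show ?case using G_XR by simp
qed

lemma ou_data: obtains n :: nat and g h where
  "cont_int N A g" "\<And>x. x \<in> XA N A \<Longrightarrow> g x \<ge> 0" "cont_int N A h"
  "\<And>x. x \<in> XA N A \<Longrightarrow> real n * c x - 1 = g x + (h x - h (shift x))"
proof -
  have "cont_int N A (\<lambda>_. 1)" unfolding cont_int_def by auto
  then show ?thesis using ou that unfolding order_unit_def by blast
qed

definition "nn = (SOME n. \<exists>g h. cont_int N A g \<and> (\<forall>x\<in>XA N A. g x \<ge> 0) \<and> cont_int N A h \<and>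
   (\<forall>x\<in>XA N A. real n * c x - 1 = g x + (h x - h (shift x))))"

lemma birkhoff: obtains H where "\<And>x t. x \<in> XA N A \<Longrightarrow> real t - 2 * H \<le> real nn * ssum t x"
proof -
  have "\<exists>n g h. cont_int N A g \<and> (\<forall>x\<in>XA N A. g x \<ge> 0) \<and> cont_int N A h \<and>
   (\<forall>x\<in>XA N A. real n * c x - 1 = g x + (h x - h (shift x)))"
    using ou_data by metis
  then obtain g h where gh: "cont_int N A g" "\<forall>x\<in>XA N A. g x \<ge> 0" "cont_int N A h"
     "\<forall>x\<in>XA N A. real nn * c x - 1 = g x + (h x - h (shift x))"
    unfolding nn_def by (rule someI_ex[where P = "\<lambda>n. \<exists>g h. _ n g h", THEN exE]) blast
  obtain H where H: "\<And>x. x \<in> topspace X \<Longrightarrow> \<bar>h x\<bar> \<le> H"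
    using bounded_on_compact[OF compact_XA] gh(3) unfolding cont_int_def by blast
  have "real t - 2 * H \<le> real nn * ssum t x" if x: "x \<in> XA N A" for x t
  proof -
    have "real nn * ssum t x - real t = (\<Sum>i<t. real nn * c ((shift ^^ i) x) - 1)"
      unfolding ssum_def by (simp add: sum_distrib_left sum_subtractf)
    also have "\<dots> = (\<Sum>i<t. g ((shift ^^ i) x) + (h ((shift ^^ i) x) - h ((shift ^^ Suc i) x)))"
      using gh(4) funpow_shift_XA[OF x] by (intro sum.cong) auto
    also have "\<dots> = (\<Sum>i<t. g ((shift ^^ i) x)) + (h x - h ((shift ^^ t) x))"
      by (simp add: sum.distrib sum_lessThan_telescope'[where f = "\<lambda>i. h ((shift ^^ i) x)"] del: funpow.simps)
    also have "\<dots> \<ge> 0 + (- H - H)"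
      using gh(2) funpow_shift_XA[OF x] H[of x] H[of "(shift ^^ t) x"] x
      by (intro add_mono sum_nonneg) (auto simp: topspace_XA_top)
    finally show ?thesis by linarith
  qed
  then show ?thesis using that by blast
qed

definition "HH = (SOME H. \<forall>x t. x \<in> XA N A \<longrightarrow> real t - 2 * H \<le> real nn * ssum t x)"

lemma HH: "x \<in> XA N A \<Longrightarrow> real t - 2 * HH \<le> real nn * ssum t x"
proof -
  obtain H where "\<And>x t. x \<in> XA N A \<Longrightarrow> real t - 2 * H \<le> real nn * ssum t x" using birkhoff by blast
  then have "\<exists>H. \<forall>x t. x \<in> XA N A \<longrightarrow> real t - 2 * H \<le> real nn * ssum t x" by blast
  from someI_ex[OF this] show "x \<in> XA N A \<Longrightarrow> ?thesis" unfolding HH_def by blast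
qed

definition "Tb R = nat \<lceil>real nn * R + 2 * HH + 1\<rceil>"

lemma Tb_mono: "R \<le> R' \<Longrightarrow> Tb R \<le> Tb R'"
  unfolding Tb_def by (intro nat_mono ceiling_mono) (simp add: mult_left_mono)

lemma valid_bound:
  assumes "p \<in> XR'" "snd p \<le> R" "valid i p"
  shows "i \<le> Tb R"
proof (cases i)
  case 0 then show ?thesis by simp
next
  case (Suc t)
  obtain x r where p: "p = (x, r)" by force
  have x: "x \<in> XA N A" using assms(1) p unfolding XR_def by auto
  have "l ((shift ^^ t) x) \<le> r - ssum t x"
    using assms(3) Suc p unfolding valid_def by (auto simp: G_funpow)
  moreover have "l ((shift ^^ t) x) \<ge> 0" using l_nonneg funpow_shift_XA[OF x] by blast
  ultimately have "ssum t x \<le> R" using assms(2) p by simp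
  then have "real nn * ssum t x \<le> real nn * R" by (simp add: mult_left_mono)
  with HH[OF x, of t] have "real t \<le> real nn * R + 2 * HH" by linarith
  then show ?thesis unfolding Tb_def Suc by linarith
qed

lemma valid_finite: "p \<in> XR' \<Longrightarrow> finite {i. valid i p}"
proof -
  assume p: "p \<in> XR'"
  have "{i. valid i p} \<subseteq> {..Tb (snd p)}" using valid_bound[OF p, of "snd p"] by auto
  then show ?thesis by (rule finite_subset) simp
qed

lemma susp_gen_eq: "(u, v) \<in> susp_gen N A l k b \<longleftrightarrow> u \<in> XR' \<and> l (fst u) \<le> snd u \<and> v = G u"
  by (cases u) (auto simp: susp_gen_def G_def c_def)

lemma E_char: "(p, q) \<in> E \<longleftrightarrow> p \<in> XR' \<and> q \<in> XR' \<and>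
   (\<exists>i j. valid i p \<and> valid j q \<and> (G ^^ i) p = (G ^^ j) q)"
proof -
  let ?S = "susp_gen N A l k b"
  have fwd: "(p, (G ^^ i) p) \<in> (rtrancl ?S)" if "p \<in> XR'" "valid i p" for p i
    using that
  proof (induction i)
    case 0 then show ?case by simp
  next
    case (Suc i)
    then have "(p, (G ^^ i) p) \<in> (rtrancl ?S)" using valid_Suc by blast
    moreover have "((G ^^ i) p, (G ^^ Suc i) p) \<in> ?S"
      using Suc.prems valid_XR[of p "Suc i" i] by (simp add: susp_gen_eq valid_Suc)
    ultimately show ?case by (rule rtrancl_into_rtrancl)
  qed
  have bwd: "(p, q) \<in> (rtrancl (?S \<union> converse ?S)) \<Longrightarrow> p \<in> XR' \<Longrightarrow>
      q \<in> XR' \<and> (\<exists>i j. valid i p \<and> valid j q \<and> (G ^^ i) p = (G ^^ j) q)"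
  proof (induction rule: rtrancl_induct)
    case base
    then show ?case by (auto intro!: exI[of _ 0] simp: valid_def)
  next
    case (step q q')
    then obtain i j where ij: "q \<in> XR'" "valid i p" "valid j q" "(G ^^ i) p = (G ^^ j) q" by blast
    from step(2) show ?case
    proof
      assume "(q, q') \<in> ?S"
      then have q': "q' = G q" "l (fst q) \<le> snd q" by (simp_all add: susp_gen_eq)
      then have "q' \<in> XR'" using G_XR ij(1) by simp
      moreover have "\<exists>i j. valid i p \<and> valid j q' \<and> (G ^^ i) p = (G ^^ j) q'"
      proof (cases j)
        case 0
        then have "valid (Suc i) p" "(G ^^ Suc i) p = (G ^^ 0) q'"
          using ij q' by (auto simp: valid_Suc)
        then show ?thesis using valid_0 by blast
      next
        case (Suc j')
        then have "valid j' q'" "(G ^^ i) p = (G ^^ j') q'"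
          using ij q' valid_Suc' by (auto simp: funpow_Suc_right simp del: funpow.simps)
        then show ?thesis using ij by blast
      qed
      ultimately show ?thesis by blast
    next
      assume "(q, q') \<in> (converse ?S)"
      then have q': "q = G q'" "l (fst q') \<le> snd q'" "q' \<in> XR'" by (simp_all add: susp_gen_eq)
      then have "valid (Suc j) q'" "(G ^^ i) p = (G ^^ Suc j) q'"
        using ij valid_Suc' by (auto simp: funpow_Suc_right simp del: funpow.simps)
      then show ?thesis using q' ij by blast
    qed
  qed
  show ?thesis
  proof
    assume "(p, q) \<in> E"
    then show "p \<in> XR' \<and> q \<in> XR' \<and> (\<exists>i j. valid i p \<and> valid j q \<and> (G ^^ i) p = (G ^^ j) q)"
      unfolding E_def gen_equiv_def using bwd by blast
  next
    assume "p \<in> XR' \<and> q \<in> XR' \<and> (\<exists>i j. valid i p \<and> valid j q \<and> (G ^^ i) p = (G ^^ j) q)"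
    then obtain i j where ij: "p \<in> XR'" "q \<in> XR'" "valid i p" "valid j q" "(G ^^ i) p = (G ^^ j) q" by blast
    have "(p, (G ^^ i) p) \<in> (rtrancl (?S \<union> converse ?S))"
      using fwd[OF ij(1,3)] rtrancl_mono[of ?S "?S \<union> (converse ?S)"] by blast
    moreover have "(q, (G ^^ j) q) \<in> (rtrancl (?S \<union> converse ?S))"
      using fwd[OF ij(2,4)] rtrancl_mono[of ?S "?S \<union> (converse ?S)"] by blast
    then have "((G ^^ j) q, q) \<in> (rtrancl (?S \<union> converse ?S))"
      by (metis converse_Un converse_converse rtrancl_converseI sup_commute)
    ultimately show "(p, q) \<in> E" unfolding E_def gen_equiv_def using ij
      by (metis (no_types, lifting) IntI mem_Sigma_iff rtrancl_trans)
  qed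
qed

lemma equiv_E: "equiv XR' E"
proof -
  let ?S = "susp_gen N A l k b"
  have "sym ((rtrancl (?S \<union> converse ?S)))"
    by (simp add: sym_rtrancl sym_Un_converse)
  then show ?thesis
    unfolding E_def gen_equiv_def equiv_def refl_on_def sym_def trans_def
    by (auto intro: rtrancl_trans)
qed

end

context susp begin

lemma topspace_P: "topspace P = XA N A \<times> UNIV"
  by (simp add: topspace_XA_top)

lemma Hausdorff_P: "Hausdorff_space P"
  by (simp add: Hausdorff_space_prod_topology Hausdorff_XA)

lemma XR_sub: "XR' \<subseteq> topspace P"
  unfolding topspace_P XR_def by auto

lemma cont_G: "continuous_map P P G"
proof -
  have 1: "continuous_map P X (\<lambda>p. shift (fst p))"
    using continuous_map_compose[OF continuous_map_fst cont_shift] by (simp add: o_def)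
  have 2: "continuous_map P euclideanreal (\<lambda>p. c (fst p))"
    using continuous_map_compose[OF continuous_map_fst cont_c] by (simp add: o_def)
  have "continuous_map P P (\<lambda>p. (shift (fst p), snd p - c (fst p)))"
    by (intro continuous_map_pairedI continuous_map_diff continuous_map_snd 1 2)
  then show ?thesis unfolding G_def[abs_def] .
qed

lemma cont_Gt: "continuous_map P P (G ^^ t)"
proof (induction t)
  case 0 then show ?case by simp
next
  case (Suc t)
  have "continuous_map P P (G \<circ> (G ^^ t))" by (rule continuous_map_compose[OF Suc cont_G])
  then show ?case by (simp add: o_def)
qed

lemma closed_valid: "closedin P {p \<in> topspace P. valid i p}"
proof -
  have c1: "closedin P {p \<in> topspace P. (\<lambda>p. snd ((G ^^ t) p) - l (fst ((G ^^ t) p))) p \<in> {0..}}" for t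
  proof (rule closedin_continuous_map_preimage)
    have "continuous_map P euclideanreal (snd \<circ> (G ^^ t))"
      by (rule continuous_map_compose[OF cont_Gt continuous_map_snd])
    moreover have "continuous_map P euclideanreal (l \<circ> (fst \<circ> (G ^^ t)))"
      by (rule continuous_map_compose[OF continuous_map_compose[OF cont_Gt continuous_map_fst] cont_l])
    ultimately show "continuous_map P euclideanreal (\<lambda>p. snd ((G ^^ t) p) - l (fst ((G ^^ t) p)))"
      using continuous_map_diff by (simp add: o_def)
  qed auto
  have "{p \<in> topspace P. valid i p} = \<Inter>(insert (topspace P) ((\<lambda>t. {p \<in> topspace P. (\<lambda>p. snd ((G ^^ t) p) - l (fst ((G ^^ t) p))) p \<in> {0..}}) ` {..<i}))"
    unfolding valid_def by auto
  also have "closedin P \<dots>"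
    using c1 closedin_topspace[of P] by (intro closedin_Inter) auto
  finally show ?thesis .
qed

lemma closed_XR: "closedin P XR'"
proof -
  have "XR' = {p \<in> topspace P. (\<lambda>p. snd p - b (fst p)) p \<in> {0..}}"
    unfolding XR_def topspace_P by auto
  also have "closedin P \<dots>"
  proof (rule closedin_continuous_map_preimage)
    show "continuous_map P euclideanreal (\<lambda>p. snd p - b (fst p))"
      using continuous_map_compose[OF continuous_map_fst cont_b]
      by (intro continuous_map_diff continuous_map_snd) (auto simp: o_def)
  qed auto
  finally show ?thesis .
qed

definition BR :: "real \<Rightarrow> ((nat \<Rightarrow> nat) \<times> real) set" where
  "BR R = {p \<in> XR'. snd p \<le> R}"

lemma closed_BR: "closedin P (BR R)"
proof -
  have "BR R = XR' \<inter> {p \<in> topspace P. snd p \<in> {..R}}"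
    unfolding BR_def using XR_sub by auto
  also have "closedin P \<dots>"
    by (intro closedin_Int closed_XR closedin_continuous_map_preimage[OF continuous_map_snd]) auto
  finally show ?thesis .
qed

lemma compact_BR: "compactin P (BR R)"
proof -
  obtain Bb where Bb: "\<And>x. x \<in> topspace X \<Longrightarrow> \<bar>b x\<bar> \<le> Bb"
    using bounded_on_compact[OF compact_XA cont_b] by blast
  have "compactin P (XA N A \<times> {-Bb..R})"
    using compact_XA unfolding compactin_Times compact_space_def topspace_XA_top by auto
  moreover have "BR R \<subseteq> XA N A \<times> {-Bb..R}"
  proof
    fix p assume "p \<in> BR R"
    then show "p \<in> XA N A \<times> {-Bb..R}"
      using Bb[of "fst p"] unfolding BR_def XR_def topspace_XA_top by (cases p) auto
  qed
  ultimately show ?thesis using closed_compactin closed_BR by blast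
qed

end

context susp begin

lemma E_sub: "E \<subseteq> XR' \<times> XR'"
  using E_char by auto

lemma sat_local:
  assumes D: "closedin P D" "D \<subseteq> BR R0"
  shows "closedin P (E `` D \<inter> BR R)"
proof -
  define T where "T = Tb (max R R0)"
  define V where "V i = {p \<in> topspace P. valid i p}" for i
  define Z where "Z i j = {pq \<in> topspace (prod_topology P P). fst pq \<in> BR R \<and> snd pq \<in> D \<and>
      fst pq \<in> V i \<and> snd pq \<in> V j \<and> ((G ^^ i) \<circ> fst) pq = ((G ^^ j) \<circ> snd) pq}" for i j
  have cD: "compactin P D" using closed_compactin[OF compact_BR[of R0] D(2) D(1)] .
  have cZ: "compactin P (fst ` Z i j)" for i j
  proof -
    have "compactin (prod_topology P P) (BR R \<times> D)"
      using compact_BR cD by (simp add: compactin_Times)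
    moreover have "Z i j \<subseteq> BR R \<times> D" unfolding Z_def by auto
    moreover have "closedin (prod_topology P P) (Z i j)"
    proof -
      have "Z i j = {pq \<in> topspace (prod_topology P P). fst pq \<in> BR R} \<inter>
                    {pq \<in> topspace (prod_topology P P). snd pq \<in> D} \<inter>
                    {pq \<in> topspace (prod_topology P P). fst pq \<in> V i} \<inter>
                    {pq \<in> topspace (prod_topology P P). snd pq \<in> V j} \<inter>
                    {pq \<in> topspace (prod_topology P P). ((G ^^ i) \<circ> fst) pq = ((G ^^ j) \<circ> snd) pq}"
        unfolding Z_def by auto
      also have "closedin (prod_topology P P) \<dots>"
        apply (intro closedin_Int)
            apply (rule closedin_continuous_map_preimage[OF continuous_map_fst closed_BR])
           apply (rule closedin_continuous_map_preimage[OF continuous_map_snd D(1)])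
          apply (rule closedin_continuous_map_preimage[OF continuous_map_fst]) apply (unfold V_def, rule closed_valid)
         apply (rule closedin_continuous_map_preimage[OF continuous_map_snd]) apply (rule closed_valid)
        apply (rule closedin_continuous_maps_eq[OF Hausdorff_P])
         apply (rule continuous_map_compose[OF continuous_map_fst cont_Gt])
        apply (rule continuous_map_compose[OF continuous_map_snd cont_Gt])
        done
      finally show ?thesis .
    qed
    ultimately have "compactin (prod_topology P P) (Z i j)" using closed_compactin by blast
    then show ?thesis using image_compactin continuous_map_fst by blast
  qed
  have eq: "E `` D \<inter> BR R = \<Union>((\<lambda>(i,j). fst ` Z i j) ` ({..T} \<times> {..T}))"
  proof
    show "E `` D \<inter> BR R \<subseteq> \<Union>((\<lambda>(i,j). fst ` Z i j) ` ({..T} \<times> {..T}))"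
    proof
      fix y assume y: "y \<in> E `` D \<inter> BR R"
      then obtain x where x: "x \<in> D" "(x, y) \<in> E" by auto
      then obtain i j where ij: "x \<in> XR'" "y \<in> XR'" "valid i x" "valid j y" "(G ^^ i) x = (G ^^ j) y"
        using E_char by blast
      have "i \<le> Tb R0" using valid_bound[OF ij(1) _ ij(3)] x D(2) unfolding BR_def by auto
      then have i: "i \<le> T" unfolding T_def using Tb_mono[of R0 "max R R0"] by simp
      have "j \<le> Tb R" using valid_bound[OF ij(2) _ ij(4)] y unfolding BR_def by auto
      then have j: "j \<le> T" unfolding T_def using Tb_mono[of R "max R R0"] by simp
      have "(y, x) \<in> Z j i"
        unfolding Z_def V_def using y x ij XR_sub by auto
      then show "y \<in> \<Union>((\<lambda>(i,j). fst ` Z i j) ` ({..T} \<times> {..T}))"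
      proof -
        have "y \<in> fst ` Z j i" using \<open>(y, x) \<in> Z j i\<close> by (metis fst_conv image_eqI)
        then show ?thesis using i j by blast
      qed
    qed
  next
    show "\<Union>((\<lambda>(i,j). fst ` Z i j) ` ({..T} \<times> {..T})) \<subseteq> E `` D \<inter> BR R"
    proof
      fix y assume "y \<in> \<Union>((\<lambda>(i,j). fst ` Z i j) ` ({..T} \<times> {..T}))"
      then obtain i j x where "(y, x) \<in> Z i j" by force
      then have yx: "y \<in> BR R" "x \<in> D" "valid i y" "valid j x" "(G ^^ i) y = (G ^^ j) x"
        unfolding Z_def V_def by auto
      moreover have "x \<in> XR'" "y \<in> XR'" using yx D(2) unfolding BR_def by auto
      ultimately have "(x, y) \<in> E" using E_char[of x y] by metis
      then show "y \<in> E `` D \<inter> BR R" using yx by auto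
    qed
  qed
  have "closedin P (\<Union>((\<lambda>(i,j). fst ` Z i j) ` ({..T} \<times> {..T})))"
    using cZ by (intro closedin_Union) (auto intro: compactin_imp_closedin[OF Hausdorff_P])
  then show ?thesis using eq by simp
qed

lemma sat_closed:
  assumes D: "closedin P D" "D \<subseteq> BR R0"
  shows "closedin P (E `` D)"
proof -
  have sub: "E `` D \<subseteq> topspace P" using E_sub XR_sub by blast
  have "openin P (topspace P - E `` D)"
  proof (subst openin_subopen, intro ballI)
    fix p assume p: "p \<in> topspace P - E `` D"
    define R where "R = snd p + 1"
    define W where "W = (topspace P - (E `` D \<inter> BR R)) \<inter> {q \<in> topspace P. snd q \<in> {..<R}}"
    have "openin P W"
      unfolding W_def
      by (intro openin_Int openin_diff openin_topspace sat_local[OF D]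
           openin_continuous_map_preimage[OF continuous_map_snd]) auto
    moreover have "p \<in> W" using p unfolding W_def R_def by auto
    moreover have "W \<subseteq> topspace P - E `` D"
    proof
      fix q assume q: "q \<in> W"
      show "q \<in> topspace P - E `` D"
      proof (rule ccontr)
        assume "q \<notin> topspace P - E `` D"
        then have "q \<in> E `` D" using q unfolding W_def by auto
        moreover then have "q \<in> XR'" using E_sub by blast
        ultimately show False using q unfolding W_def BR_def by auto
      qed
    qed
    ultimately show "\<exists>T. openin P T \<and> p \<in> T \<and> T \<subseteq> topspace P - E `` D" by blast
  qed
  then show ?thesis using sub unfolding closedin_def by blast
qed

end

context susp begin

abbreviation "Q \<equiv> suspension_space N A l k b"

lemma topspace_XRt: "topspace (XR_top N A b) = XR'"
  unfolding XR_top_def using XR_sub by auto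

lemma meets:
  assumes p: "p \<in> XR'" and Lb: "\<And>x. x \<in> XA N A \<Longrightarrow> l x \<le> Lb"
  shows "\<exists>q. (p, q) \<in> E \<and> q \<in> BR Lb"
proof -
  define m where "m = Max {i. valid i p}"
  have fin: "finite {i. valid i p}" using valid_finite[OF p] .
  have vm: "valid m p" unfolding m_def using Max_in[OF fin] valid_0[of p] by blast
  have "\<not> valid (Suc m) p" using Max_ge[OF fin, of "Suc m"] unfolding m_def by auto
  then have lt: "\<not> l (fst ((G ^^ m) p)) \<le> snd ((G ^^ m) p)" using vm valid_Suc by blast
  have q: "(G ^^ m) p \<in> XR'" using valid_XR[OF p vm] by simp
  then have "l (fst ((G ^^ m) p)) \<le> Lb" using Lb unfolding XR_def by auto
  then have "(G ^^ m) p \<in> BR Lb" using q lt unfolding BR_def by auto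
  moreover have "(p, (G ^^ m) p) \<in> E" using E_char[of p "(G ^^ m) p"] p q vm
    by (metis funpow_0 valid_0)
  ultimately show ?thesis by blast
qed

lemma istop: "istopology (\<lambda>U. U \<subseteq> XR' // E \<and> openin (XR_top N A b) (\<Union>U))"
  unfolding istopology_def
proof (intro conjI)
  show "\<forall>S T. S \<subseteq> XR' // E \<and> openin (XR_top N A b) (\<Union>S) \<longrightarrow> T \<subseteq> XR' // E \<and> openin (XR_top N A b) (\<Union>T) \<longrightarrow>
     S \<inter> T \<subseteq> XR' // E \<and> openin (XR_top N A b) (\<Union>(S \<inter> T))"
  proof (intro allI impI)
  fix S T assume S: "S \<subseteq> XR' // E \<and> openin (XR_top N A b) (\<Union>S)"
    and T: "T \<subseteq> XR' // E \<and> openin (XR_top N A b) (\<Union>T)"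
  have "\<Union>(S \<inter> T) = \<Union>S \<inter> \<Union>T"
  proof
    show "\<Union>S \<inter> \<Union>T \<subseteq> \<Union>(S \<inter> T)"
    proof
      fix x assume "x \<in> \<Union>S \<inter> \<Union>T"
      then obtain Y Z where "Y \<in> S" "Z \<in> T" "x \<in> Y" "x \<in> Z" by auto
      then have "Y = Z" using quotient_disj[OF equiv_E, of Y Z] S T by blast
      then show "x \<in> \<Union>(S \<inter> T)" using \<open>Y \<in> S\<close> \<open>Z \<in> T\<close> \<open>x \<in> Y\<close> by blast
    qed
  qed auto
  then show "S \<inter> T \<subseteq> XR' // E \<and> openin (XR_top N A b) (\<Union>(S \<inter> T))"
    using S T by auto
  qed
next
  show "\<forall>K. (\<forall>U\<in>K. U \<subseteq> XR' // E \<and> openin (XR_top N A b) (\<Union>U)) \<longrightarrow> \<Union>K \<subseteq> XR' // E \<and> openin (XR_top N A b) (\<Union>(\<Union>K))"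
  proof (intro allI impI)
  fix K assume K: "\<forall>U\<in>K. U \<subseteq> XR' // E \<and> openin (XR_top N A b) (\<Union>U)"
  show "\<Union>K \<subseteq> XR' // E \<and> openin (XR_top N A b) (\<Union>(\<Union>K))"
  proof -
    have 1: "\<Union>K \<subseteq> XR' // E" using K by blast
    have 2: "\<Union>(\<Union>K) = \<Union>((\<lambda>U. \<Union>U) ` K)" by blast
    have "openin (XR_top N A b) (\<Union>((\<lambda>U. \<Union>U) ` K))" using K by (intro openin_Union) auto
    then show ?thesis using 1 2 by simp
  qed
  qed
qed

lemma openin_Q: "openin Q U \<longleftrightarrow> U \<subseteq> XR' // E \<and> openin (XR_top N A b) (\<Union>U)"
  unfolding suspension_space_def quotient_topology_def topology_inverse'[OF istop[unfolded E_def]] E_def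
  topspace_XRt ..

lemma topspace_Q: "topspace Q = XR' // E"
proof -
  have "openin Q (XR' // E)"
    unfolding openin_Q Union_quotient[OF equiv_E] using openin_topspace[of "XR_top N A b"]
    by (simp add: topspace_XRt)
  then have "XR' // E \<subseteq> topspace Q" by (rule openin_subset)
  moreover have "topspace Q \<subseteq> XR' // E"
    unfolding topspace_def openin_Q by auto
  ultimately show ?thesis by blast
qed

lemma cont_quot: "continuous_map (XR_top N A b) Q (\<lambda>p. E `` {p})"
  unfolding continuous_map
proof (intro conjI allI impI)
  show "(\<lambda>p. E `` {p}) ` topspace (XR_top N A b) \<subseteq> topspace Q"
    unfolding topspace_Q topspace_XRt by (auto intro: quotientI)
next
  fix U assume U: "openin Q U"
  then have U': "U \<subseteq> XR' // E" "openin (XR_top N A b) (\<Union>U)" unfolding openin_Q by auto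
  have "{x \<in> topspace (XR_top N A b). E `` {x} \<in> U} = \<Union>U"
  proof
    show "\<Union>U \<subseteq> {x \<in> topspace (XR_top N A b). E `` {x} \<in> U}"
    proof
      fix x assume "x \<in> \<Union>U"
      then obtain Y where Y: "Y \<in> U" "x \<in> Y" by auto
      then obtain a where a: "Y = E `` {a}" "a \<in> XR'" using U'(1) Y(1) by (meson quotientE subsetD)
      then have "(a, x) \<in> E" using Y by auto
      then have "E `` {x} = Y" using a equiv_class_eq[OF equiv_E] by metis
      moreover have "x \<in> XR'" using \<open>(a, x) \<in> E\<close> E_sub by auto
      ultimately show "x \<in> {x \<in> topspace (XR_top N A b). E `` {x} \<in> U}"
        using Y by (simp add: topspace_XRt)
    qed
  next
    show "{x \<in> topspace (XR_top N A b). E `` {x} \<in> U} \<subseteq> \<Union>U"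
    proof
      fix x assume "x \<in> {x \<in> topspace (XR_top N A b). E `` {x} \<in> U}"
      then have "x \<in> XR'" "E `` {x} \<in> U" by (auto simp: topspace_XRt)
      then show "x \<in> \<Union>U" using equiv_class_self[OF equiv_E, of x] by blast
    qed
  qed
  then show "openin (XR_top N A b) {x \<in> topspace (XR_top N A b). E `` {x} \<in> U}"
    using U' by simp
qed

end

context susp begin

lemma Lb_ex: obtains Lb where "\<And>x. x \<in> XA N A \<Longrightarrow> l x \<le> Lb"
proof -
  obtain B where "\<And>x. x \<in> topspace X \<Longrightarrow> \<bar>l x\<bar> \<le> B"
    using bounded_on_compact[OF compact_XA cont_l] by blast
  then have "\<And>x. x \<in> XA N A \<Longrightarrow> l x \<le> B" by (auto simp: topspace_XA_top abs_le_iff)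
  then show ?thesis using that by blast
qed

lemma compact_Q: "compact_space Q"
proof -
  obtain Lb where Lb: "\<And>x. x \<in> XA N A \<Longrightarrow> l x \<le> Lb" using Lb_ex by blast
  have "compactin (XR_top N A b) (BR Lb)"
    unfolding XR_top_def compactin_subtopology using compact_BR unfolding BR_def by auto
  then have "compactin Q ((\<lambda>p. E `` {p}) ` BR Lb)"
    using image_compactin cont_quot by blast
  moreover have "(\<lambda>p. E `` {p}) ` BR Lb = topspace Q"
  proof
    show "(\<lambda>p. E `` {p}) ` BR Lb \<subseteq> topspace Q"
      unfolding topspace_Q BR_def by (auto intro: quotientI)
    show "topspace Q \<subseteq> (\<lambda>p. E `` {p}) ` BR Lb"
    proof
      fix Y assume "Y \<in> topspace Q"
      then obtain p where p: "Y = E `` {p}" "p \<in> XR'" unfolding topspace_Q by (meson quotientE)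
      then obtain q where q: "(p, q) \<in> E" "q \<in> BR Lb" using meets[OF p(2) Lb] by blast
      then have "E `` {q} = Y" using p equiv_class_eq[OF equiv_E] by metis
      then show "Y \<in> (\<lambda>p. E `` {p}) ` BR Lb" using q by blast
    qed
  qed
  ultimately show ?thesis unfolding compact_space_def by simp
qed

lemma E_sym: "(p, q) \<in> E \<Longrightarrow> (q, p) \<in> E"
  using equiv_E unfolding equiv_def sym_def by blast

lemma E_trans: "(p, q) \<in> E \<Longrightarrow> (q, r) \<in> E \<Longrightarrow> (p, r) \<in> E"
  using equiv_E unfolding equiv_def trans_def by blast

lemma Hausdorff_Q: "Hausdorff_space Q"
  unfolding Hausdorff_space_def
proof (intro allI impI)
  fix Y1 Y2 assume H: "Y1 \<in> topspace Q \<and> Y2 \<in> topspace Q \<and> Y1 \<noteq> Y2"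
  obtain p1 where p1: "Y1 = E `` {p1}" "p1 \<in> XR'" using H unfolding topspace_Q by (meson quotientE)
  obtain p2 where p2: "Y2 = E `` {p2}" "p2 \<in> XR'" using H unfolding topspace_Q by (meson quotientE)
  obtain Lb where Lb: "\<And>x. x \<in> XA N A \<Longrightarrow> l x \<le> Lb" using Lb_ex by blast
  have cl: "closedin P (E `` {p} \<inter> BR Lb)" if "p \<in> XR'" for p
  proof (rule sat_local)
    show "closedin P {p}" using closedin_Hausdorff_singleton[OF Hausdorff_P] that XR_sub by blast
    show "{p} \<subseteq> BR (snd p)" using that unfolding BR_def by auto
  qed
  have cp: "compactin P (E `` {p} \<inter> BR Lb)" if "p \<in> XR'" for p
    using closed_compactin[OF compact_BR[of Lb] _ cl[OF that]] by blast
  have dj: "disjnt (E `` {p1} \<inter> BR Lb) (E `` {p2} \<inter> BR Lb)"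
  proof -
    { fix q assume "q \<in> E `` {p1}" "q \<in> E `` {p2}"
      then have "(p1, p2) \<in> E" using E_sym E_trans by blast
      then have "Y1 = Y2" using p1 p2 equiv_class_eq[OF equiv_E] by metis
      then have False using H by blast }
    then show ?thesis unfolding disjnt_def by blast
  qed
  obtain W1 W2 where W: "openin P W1" "openin P W2" "E `` {p1} \<inter> BR Lb \<subseteq> W1"
      "E `` {p2} \<inter> BR Lb \<subseteq> W2" "disjnt W1 W2"
    using Hausdorff_P[unfolded Hausdorff_space_compact_sets] cp[OF p1(2)] cp[OF p2(2)] dj by metis
  define D1 where "D1 = BR Lb - W1"
  define D2 where "D2 = BR Lb - W2"
  have D1c: "closedin P (E `` D1)"
    unfolding D1_def using closedin_diff[OF closed_BR W(1)] by (intro sat_closed) auto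
  have D2c: "closedin P (E `` D2)"
    unfolding D2_def using closedin_diff[OF closed_BR W(2)] by (intro sat_closed) auto
  define V1 where "V1 = XR' - E `` D1"
  define V2 where "V2 = XR' - E `` D2"
  have oV1: "openin (XR_top N A b) V1"
  proof -
    have "V1 = (topspace P - E `` D1) \<inter> XR'" unfolding V1_def using XR_sub by blast
    then show ?thesis unfolding XR_top_def openin_subtopology
      using openin_diff[OF openin_topspace D1c] by blast
  qed
  have oV2: "openin (XR_top N A b) V2"
  proof -
    have "V2 = (topspace P - E `` D2) \<inter> XR'" unfolding V2_def using XR_sub by blast
    then show ?thesis unfolding XR_top_def openin_subtopology
      using openin_diff[OF openin_topspace D2c] by blast
  qed
  have sat1: "E `` {p} \<subseteq> V1" if "p \<in> V1" for p
  proof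
    fix q assume "q \<in> E `` {p}"
    then have pq: "(p, q) \<in> E" by simp
    then have "q \<in> XR'" using E_sub by auto
    moreover have "q \<notin> E `` D1"
    proof
      assume "q \<in> E `` D1"
      then obtain d where "d \<in> D1" "(d, q) \<in> E" by auto
      then have "p \<in> E `` D1" using pq E_sym E_trans by blast
      then show False using that unfolding V1_def by blast
    qed
    ultimately show "q \<in> V1" unfolding V1_def by blast
  qed
  have sat2: "E `` {p} \<subseteq> V2" if "p \<in> V2" for p
  proof
    fix q assume "q \<in> E `` {p}"
    then have pq: "(p, q) \<in> E" by simp
    then have "q \<in> XR'" using E_sub by auto
    moreover have "q \<notin> E `` D2"
    proof
      assume "q \<in> E `` D2"
      then obtain d where "d \<in> D2" "(d, q) \<in> E" by auto
      then have "p \<in> E `` D2" using pq E_sym E_trans by blast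
      then show False using that unfolding V2_def by blast
    qed
    ultimately show "q \<in> V2" unfolding V2_def by blast
  qed
  have p1V: "p1 \<in> V1"
  proof -
    have "p1 \<notin> E `` D1"
    proof
      assume "p1 \<in> E `` D1"
      then obtain d where d: "d \<in> D1" "(d, p1) \<in> E" by auto
      have "(p1, d) \<in> E" using E_sym d(2) by blast
      then have "d \<in> E `` {p1} \<inter> BR Lb" using d(1) unfolding D1_def by blast
      then show False using W(3) d(1) unfolding D1_def by blast
    qed
    then show ?thesis using p1 unfolding V1_def by blast
  qed
  have p2V: "p2 \<in> V2"
  proof -
    have "p2 \<notin> E `` D2"
    proof
      assume "p2 \<in> E `` D2"
      then obtain d where d: "d \<in> D2" "(d, p2) \<in> E" by auto
      have "(p2, d) \<in> E" using E_sym d(2) by blast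
      then have "d \<in> E `` {p2} \<inter> BR Lb" using d(1) unfolding D2_def by blast
      then show False using W(4) d(1) unfolding D2_def by blast
    qed
    then show ?thesis using p2 unfolding V2_def by blast
  qed
  have V12: "V1 \<inter> V2 = {}"
  proof (rule ccontr)
    assume "V1 \<inter> V2 \<noteq> {}"
    then obtain p where p: "p \<in> V1" "p \<in> V2" by blast
    then have "p \<in> XR'" unfolding V1_def by blast
    then obtain q where q: "(p, q) \<in> E" "q \<in> BR Lb" using meets[OF _ Lb] by blast
    have "q \<in> D1 \<or> q \<in> D2" using q(2) W(5) unfolding D1_def D2_def disjnt_def by blast
    then show False
    proof
      assume "q \<in> D1" then have "p \<in> E `` D1" using q E_sym by blast
      then show False using p unfolding V1_def by blast
    next
      assume "q \<in> D2" then have "p \<in> E `` D2" using q E_sym by blast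
      then show False using p unfolding V2_def by blast
    qed
  qed
  define U1 where "U1 = {Z \<in> XR' // E. Z \<subseteq> V1}"
  define U2 where "U2 = {Z \<in> XR' // E. Z \<subseteq> V2}"
  have UU1: "\<Union>U1 = V1"
  proof
    show "\<Union>U1 \<subseteq> V1" unfolding U1_def by blast
    show "V1 \<subseteq> \<Union>U1"
    proof
      fix p assume p: "p \<in> V1"
      then have "p \<in> XR'" unfolding V1_def by blast
      then have "E `` {p} \<in> XR' // E" "p \<in> E `` {p}"
        using quotientI[of p XR' E] equiv_class_self[OF equiv_E, of p] by blast+
      then show "p \<in> \<Union>U1" using sat1[OF p] unfolding U1_def by blast
    qed
  qed
  have UU2: "\<Union>U2 = V2"
  proof
    show "\<Union>U2 \<subseteq> V2" unfolding U2_def by blast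
    show "V2 \<subseteq> \<Union>U2"
    proof
      fix p assume p: "p \<in> V2"
      then have "p \<in> XR'" unfolding V2_def by blast
      then have "E `` {p} \<in> XR' // E" "p \<in> E `` {p}"
        using quotientI[of p XR' E] equiv_class_self[OF equiv_E, of p] by blast+
      then show "p \<in> \<Union>U2" using sat2[OF p] unfolding U2_def by blast
    qed
  qed
  have "openin Q U1" unfolding openin_Q UU1 using oV1 unfolding U1_def by blast
  moreover have "openin Q U2" unfolding openin_Q UU2 using oV2 unfolding U2_def by blast
  moreover have "Y1 \<in> U1" unfolding U1_def using p1 sat1[OF p1V] quotientI[of p1 XR' E] by blast
  moreover have "Y2 \<in> U2" unfolding U2_def using p2 sat2[OF p2V] quotientI[of p2 XR' E] by blast
  moreover have "disjnt U1 U2"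
  proof -
    { fix Z assume Z: "Z \<in> U1" "Z \<in> U2"
      then have "Z \<noteq> {}" using in_quotient_imp_non_empty[OF equiv_E] unfolding U1_def by blast
      then have False using Z V12 unfolding U1_def U2_def by blast }
    then show ?thesis unfolding disjnt_def by blast
  qed
  ultimately show "\<exists>U V. openin Q U \<and> openin Q V \<and> Y1 \<in> U \<and> Y2 \<in> V \<and> disjnt U V" by blast
qed

end

theorem proposition2p4:
  fixes N :: nat and A :: "nat \<Rightarrow> nat \<Rightarrow> nat"
    and l k b :: "(nat \<Rightarrow> nat) \<Rightarrow> real"
  assumes "N > 1"
    and "zero_one_matrix N A"
    and "irreducible_matrix N A"
    and "\<not> permutation_matrix N A"
    and "suspension_triplet N A l k b"
  shows "compact_space (suspension_space N A l k b) \<and> Hausdorff_space (suspension_space N A l k b)"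
proof -
  interpret susp N A l k b using assms(5) by unfold_locales
  show ?thesis using compact_Q Hausdorff_Q by blast
qed

end
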